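(* Let $n\ge 3$ and let $A=(a_{ij})_{i,j=1}^n\in\mathbb{R}^{n\times n}$ be symmetric with $\max_{i,j}|a_{ij}|=1$. Suppose $A=LTL^T$, where $L=(l_{ij})_{i,j=1}^n$ is unit lower triangular with first column equal to $e_1$ (the first column of the identity matrix) and $|l_{ij}|\le 1$ for all $i,j$, and $T=(t_{ij})_{i,j=1}^n$ is symmetric tridiagonal. Then: (a) $|t_{11}|\le 1$, $|t_{21}|\le 1$, $|t_{22}|\le 1$, and $|l_{i2}\,t_{21}|\le 1$ for $3\le i\le n$; (b) $\left|l_{i,j-1}\,t_{j-1,j}+l_{ij}\,t_{jj}+l_{i,j+1}\,t_{j+1,j}\right|\le 2^{j-2}$ for all $2\le j<i\le n$; (c) $\left|l_{n,n-1}\,t_{n-1,n}+t_{nn}\right|\le 2^{n-2}$; (d) $|t_{i,i-1}|\le 2^{i-2}$ and $|t_{ii}|\le 2^{i-1}$ for $3\le i\le n$.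
   Context: This is the setting of Aasen's algorithm: for a symmetric matrix $A$, Aasen's algorithm computes a permutation matrix $P$ such that $PAP^T=LTL^T$ with $L$ and $T$ as described; the statement is applied with $A$ replaced by $PAP^T$ (which has the same maximal absolute entry). Entries $l_{ij}$ with $j>i$ are $0$ and $l_{ii}=1$. *)

theory Defs
  imports Main Complex_Main
begin

text \<open>Matrices of size n x n are represented as functions nat => nat => real,
  with indices ranging over 1..n (as in the paper).\<close>

definition mat_sym :: "nat \<Rightarrow> (nat \<Rightarrow> nat \<Rightarrow> real) \<Rightarrow> bool" where
  "mat_sym n A \<longleftrightarrow> (\<forall>i\<in>{1..n}. \<forall>j\<in>{1..n}. A i j = A j i)"

definition unit_lower_triangular :: "nat \<Rightarrow> (nat \<Rightarrow> nat \<Rightarrow> real) \<Rightarrow> bool" where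
  "unit_lower_triangular n L \<longleftrightarrow>
     (\<forall>i\<in>{1..n}. L i i = 1) \<and> (\<forall>i\<in>{1..n}. \<forall>j\<in>{1..n}. i < j \<longrightarrow> L i j = 0)"

definition tridiagonal :: "nat \<Rightarrow> (nat \<Rightarrow> nat \<Rightarrow> real) \<Rightarrow> bool" where
  "tridiagonal n T \<longleftrightarrow>
     (\<forall>i\<in>{1..n}. \<forall>j\<in>{1..n}. Suc i < j \<or> Suc j < i \<longrightarrow> T i j = 0)"

definition LTLt :: "nat \<Rightarrow> (nat \<Rightarrow> nat \<Rightarrow> real) \<Rightarrow> (nat \<Rightarrow> nat \<Rightarrow> real) \<Rightarrow> nat \<Rightarrow> nat \<Rightarrow> real" where
  "LTLt n L T i j = (\<Sum>k=1..n. \<Sum>m=1..n. L i k * T k m * L j m)"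

end

theory Submission
  imports Defs
begin

lemma geo_sum2: "j \<ge> 2 \<Longrightarrow> (\<Sum>k\<in>{2..<j}. (2::real)^(k-2)) = 2^(j-2) - 1"
proof (induction j rule: dec_induct)
  case base then show ?case by simp
next
  case (step m)
  then have "{2..<Suc m} = insert m {2..<m}" by auto
  then have "(\<Sum>k\<in>{2..<Suc m}. (2::real)^(k-2)) = 2^(m-2) + (\<Sum>k\<in>{2..<m}. (2::real)^(k-2))"
    by simp
  also have "\<dots> = 2^(Suc m - 2) - 1"
  proof -
    obtain k where k: "m = k + 2" using step(1) by (metis add.commute le_Suc_ex)
    show ?thesis using step(3) unfolding k by simp
  qed
  finally show ?case .
qed

lemma three_sum:
  fixes f :: "nat \<Rightarrow> real"
  assumes "2 \<le> j" "j + 1 \<le> n" "\<forall>k\<in>{1..n}. k \<notin> {j-1, j, j+1} \<longrightarrow> f k = 0"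
  shows "(\<Sum>k=1..n. f k) = f (j-1) + f j + f (j+1)"
proof -
  have "(\<Sum>k=1..n. f k) = (\<Sum>k\<in>{j-1, j, j+1}. f k)"
    apply (rule sum.mono_neutral_right)
    using assms by auto
  also have "\<dots> = f (j-1) + f j + f (j+1)"
  proof -
    have "j - 1 \<notin> {j, j+1}" "j \<notin> {j+1}" using assms by auto
    then show ?thesis by (simp add: add.assoc)
  qed
  finally show ?thesis .
qed

lemma two_sum:
  fixes f :: "nat \<Rightarrow> real"
  assumes "2 \<le> n" "\<forall>k\<in>{1..n}. k \<notin> {n-1, n} \<longrightarrow> f k = 0"
  shows "(\<Sum>k=1..n. f k) = f (n-1) + f n"
proof -
  have "(\<Sum>k=1..n. f k) = (\<Sum>k\<in>{n-1, n}. f k)"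
    apply (rule sum.mono_neutral_right)
    using assms by auto
  also have "\<dots> = f (n-1) + f n" using assms by simp
  finally show ?thesis .
qed

theorem lemma1:
  fixes n :: nat and A L T :: "nat \<Rightarrow> nat \<Rightarrow> real"
  assumes n3: "n \<ge> 3"
    and Asym: "mat_sym n A"
    and Amax: "Max {\<bar>A i j\<bar> | i j. i \<in> {1..n} \<and> j \<in> {1..n}} = 1"
    and fact: "\<forall>i\<in>{1..n}. \<forall>j\<in>{1..n}. A i j = LTLt n L T i j"
    and Lunit: "unit_lower_triangular n L"
    and Lcol1: "\<forall>i\<in>{2..n}. L i 1 = 0"
    and Lbnd: "\<forall>i\<in>{1..n}. \<forall>j\<in>{1..n}. \<bar>L i j\<bar> \<le> 1"
    and Tsym: "mat_sym n T"
    and Ttri: "tridiagonal n T"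
  shows "(\<bar>T 1 1\<bar> \<le> 1 \<and> \<bar>T 2 1\<bar> \<le> 1 \<and> \<bar>T 2 2\<bar> \<le> 1 \<and>
          (\<forall>i\<in>{3..n}. \<bar>L i 2 * T 2 1\<bar> \<le> 1))
       \<and> (\<forall>i j. 2 \<le> j \<and> j < i \<and> i \<le> n \<longrightarrow>
            \<bar>L i (j - 1) * T (j - 1) j + L i j * T j j + L i (j + 1) * T (j + 1) j\<bar> \<le> 2 ^ (j - 2))
       \<and> \<bar>L n (n - 1) * T (n - 1) n + T n n\<bar> \<le> 2 ^ (n - 2)
       \<and> (\<forall>i\<in>{3..n}. \<bar>T i (i - 1)\<bar> \<le> 2 ^ (i - 2) \<and> \<bar>T i i\<bar> \<le> 2 ^ (i - 1))"
proof -
  define H where "H i j = (\<Sum>k=1..n. L i k * T k j)" for i j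
  have Ab: "\<bar>A i j\<bar> \<le> 1" if "i \<in> {1..n}" "j \<in> {1..n}" for i j
  proof -
    have fin: "finite {\<bar>A i j\<bar> | i j. i \<in> {1..n} \<and> j \<in> {1..n}}"
    proof -
      have "{\<bar>A i j\<bar> | i j. i \<in> {1..n} \<and> j \<in> {1..n}} = (\<lambda>(i,j). \<bar>A i j\<bar>) ` ({1..n} \<times> {1..n})"
        by force
      then show ?thesis by simp
    qed
    have "\<bar>A i j\<bar> \<in> {\<bar>A i j\<bar> | i j. i \<in> {1..n} \<and> j \<in> {1..n}}" using that by blast
    from Max_ge[OF fin this] show ?thesis using Amax by simp
  qed
  have Lu: "L i i = 1" if "i \<in> {1..n}" for i using Lunit that unfolding unit_lower_triangular_def by blast
  have Lz: "L i j = 0" if "i \<in> {1..n}" "j \<in> {1..n}" "i < j" for i j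
    using Lunit that unfolding unit_lower_triangular_def by blast
  have Tz: "T i j = 0" if "i \<in> {1..n}" "j \<in> {1..n}" "Suc i < j \<or> Suc j < i" for i j
    using Ttri that unfolding tridiagonal_def by blast
  have Ts: "T i j = T j i" if "i \<in> {1..n}" "j \<in> {1..n}" for i j
    using Tsym that unfolding mat_sym_def by blast
  have AH: "A i j = (\<Sum>m=1..n. H i m * L j m)" if "i \<in> {1..n}" "j \<in> {1..n}" for i j
  proof -
    have "A i j = (\<Sum>k=1..n. \<Sum>m=1..n. L i k * T k m * L j m)"
      using fact that unfolding LTLt_def by blast
    also have "\<dots> = (\<Sum>m=1..n. \<Sum>k=1..n. L i k * T k m * L j m)" by (rule sum.swap)
    also have "\<dots> = (\<Sum>m=1..n. H i m * L j m)"
      unfolding H_def by (simp add: sum_distrib_right)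
    finally show ?thesis .
  qed
  have AH2: "A i j = H i j + (\<Sum>m\<in>{2..<j}. H i m * L j m)" if "i \<in> {1..n}" "j \<in> {2..n}" for i j
  proof -
    have Lj1: "L j 1 = 0" using Lcol1 that by blast
    have "A i j = (\<Sum>m=1..n. H i m * L j m)" using AH that by auto
    also have "\<dots> = (\<Sum>m\<in>{2..j}. H i m * L j m)"
    proof (intro sum.mono_neutral_right)
      show "\<forall>m\<in>{1..n} - {2..j}. H i m * L j m = 0"
      proof
        fix m assume m: "m \<in> {1..n} - {2..j}"
        show "H i m * L j m = 0"
        proof (cases "m = 1")
          case True then show ?thesis using Lj1 by simp
        next
          case False then have "L j m = 0" using m that by (intro Lz) auto
          then show ?thesis by simp
        qed
      qed
    qed (use that in auto)
    also have "{2..j} = insert j {2..<j}" using that by auto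
    also have "(\<Sum>m\<in>insert j {2..<j}. H i m * L j m) = H i j * L j j + (\<Sum>m\<in>{2..<j}. H i m * L j m)"
      by simp
    finally show ?thesis using Lu[of j] that by simp
  qed
  have Hb: "\<forall>i\<in>{1..n}. \<bar>H i j\<bar> \<le> 2^(j-2)" if "j \<in> {2..n}" for j
    using that
  proof (induction j rule: less_induct)
    case (less j)
    show ?case
    proof
      fix i assume i: "i \<in> {1..n}"
      have "H i j = A i j - (\<Sum>m\<in>{2..<j}. H i m * L j m)" using AH2[OF i less.prems] by simp
      also have "\<bar>\<dots>\<bar> \<le> \<bar>A i j\<bar> + \<bar>\<Sum>m\<in>{2..<j}. H i m * L j m\<bar>" by (rule abs_triangle_ineq4)
      also have "\<dots> \<le> 1 + (\<Sum>m\<in>{2..<j}. (2::real)^(m-2))"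
      proof (rule add_mono)
        show "\<bar>A i j\<bar> \<le> 1" using Ab i less.prems by auto
        have "\<bar>\<Sum>m\<in>{2..<j}. H i m * L j m\<bar> \<le> (\<Sum>m\<in>{2..<j}. \<bar>H i m * L j m\<bar>)" by (rule sum_abs)
        also have "\<dots> \<le> (\<Sum>m\<in>{2..<j}. (2::real)^(m-2))"
        proof (rule sum_mono)
          fix m assume m: "m \<in> {2..<j}"
          have h1: "\<bar>H i m\<bar> \<le> 2^(m-2)" using less.IH[of m] m less.prems i by auto
          have h2: "\<bar>L j m\<bar> \<le> 1" using Lbnd m less.prems by auto
          have "\<bar>H i m * L j m\<bar> = \<bar>H i m\<bar> * \<bar>L j m\<bar>" by (simp add: abs_mult)
          also have "\<dots> \<le> 2^(m-2) * 1" by (rule mult_mono) (use h1 h2 in auto)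
          finally show "\<bar>H i m * L j m\<bar> \<le> 2^(m-2)" by simp
        qed
        finally show "\<bar>\<Sum>m\<in>{2..<j}. H i m * L j m\<bar> \<le> (\<Sum>m\<in>{2..<j}. (2::real)^(m-2))" .
      qed
      also have "\<dots> = 2^(j-2)" using geo_sum2[of j] less.prems by simp
      finally show "\<bar>H i j\<bar> \<le> 2^(j-2)" .
    qed
  qed
  have H3: "H i j = L i (j - 1) * T (j - 1) j + L i j * T j j + L i (j + 1) * T (j + 1) j"
    if "i \<in> {1..n}" "2 \<le> j" "j + 1 \<le> n" for i j
    unfolding H_def using that by (intro three_sum) (auto intro!: Tz)
  have Hn: "H i n = L i (n - 1) * T (n - 1) n + L i n * T n n" if "i \<in> {1..n}" for i
    unfolding H_def using that n3 by (intro two_sum) (auto intro!: Tz)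
  have Hup: "H (j-1) j = T (j-1) j" if "j \<in> {2..n}" for j
  proof -
    have "H (j-1) j = (\<Sum>k\<in>{j-1}. L (j-1) k * T k j)"
      unfolding H_def using that
    proof (intro sum.mono_neutral_right)
      show "\<forall>k\<in>{1..n} - {j - 1}. L (j - 1) k * T k j = 0"
      proof
        fix k assume k: "k \<in> {1..n} - {j - 1}"
        show "L (j - 1) k * T k j = 0"
        proof (cases "k < j - 1")
          case True then have "T k j = 0" using k that by (intro Tz) auto
          then show ?thesis by simp
        next
          case False then have "L (j-1) k = 0" using k that by (intro Lz) auto
          then show ?thesis by simp
        qed
      qed
    qed auto
    moreover have "L (j-1) (j-1) = 1" using that by (intro Lu) auto
    ultimately show ?thesis by simp
  qed
  have H1: "H i 1 = L i 1 * T 1 1 + L i 2 * T 2 1" if "i \<in> {1..n}" for i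
  proof -
    have "H i 1 = (\<Sum>k\<in>{1,2}. L i k * T k 1)"
      unfolding H_def using that n3
      by (intro sum.mono_neutral_right) (auto simp: Tz)
    then show ?thesis by simp
  qed
  have AH1: "A i 1 = H i 1" if "i \<in> {1..n}" for i
  proof -
    have "A i 1 = (\<Sum>m=1..n. H i m * L 1 m)" using AH that n3 by auto
    also have "\<dots> = (\<Sum>m\<in>{1}. H i m * L 1 m)"
      using that n3
      by (intro sum.mono_neutral_right) (auto simp: Lz)
    finally show ?thesis using Lu[of 1] n3 by simp
  qed
  have L12: "L 1 2 = 0" using Lz[of 1 2] n3 by simp
  have L11: "L 1 1 = 1" using Lu[of 1] n3 by simp
  have L21: "L 2 1 = 0" using Lcol1 n3 by simp
  have L22: "L 2 2 = 1" using Lu[of 2] n3 by simp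
  have pa1: "\<bar>T 1 1\<bar> \<le> 1" using AH1[of 1] H1[of 1] Ab[of 1 1] n3 L11 L12 by simp
  have pa2: "\<bar>T 2 1\<bar> \<le> 1" using AH1[of 2] H1[of 2] Ab[of 2 1] n3 L21 L22 by simp
  have pa3: "\<bar>T 2 2\<bar> \<le> 1"
  proof -
    have "A 2 2 = H 2 2" using AH2[of 2 2] n3 by simp
    moreover have "H 2 2 = T 2 2" using H3[of 2 2] n3 L21 L22 Lz[of 2 3] by simp
    ultimately show ?thesis using Ab[of 2 2] n3 by simp
  qed
  have pa4: "\<forall>i\<in>{3..n}. \<bar>L i 2 * T 2 1\<bar> \<le> 1"
  proof
    fix i assume i: "i \<in> {3..n}"
    then have "A i 1 = L i 2 * T 2 1" using AH1[of i] H1[of i] Lcol1 by auto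
    then show "\<bar>L i 2 * T 2 1\<bar> \<le> 1" using Ab[of i 1] i by auto
  qed
  have pb: "\<forall>i j. 2 \<le> j \<and> j < i \<and> i \<le> n \<longrightarrow>
            \<bar>L i (j - 1) * T (j - 1) j + L i j * T j j + L i (j + 1) * T (j + 1) j\<bar> \<le> 2 ^ (j - 2)"
  proof (intro allI impI)
    fix i j assume h: "2 \<le> j \<and> j < i \<and> i \<le> n"
    then have "H i j = L i (j - 1) * T (j - 1) j + L i j * T j j + L i (j + 1) * T (j + 1) j"
      by (intro H3) auto
    moreover have "\<bar>H i j\<bar> \<le> 2 ^ (j - 2)" using Hb[of j] h by auto
    ultimately show "\<bar>L i (j - 1) * T (j - 1) j + L i j * T j j + L i (j + 1) * T (j + 1) j\<bar> \<le> 2 ^ (j - 2)"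
      by simp
  qed
  have pc: "\<bar>L n (n - 1) * T (n - 1) n + T n n\<bar> \<le> 2 ^ (n - 2)"
  proof -
    have "\<bar>H n n\<bar> \<le> 2 ^ (n - 2)" using Hb[of n] n3 by auto
    moreover have "H n n = L n (n - 1) * T (n - 1) n + T n n" using Hn[of n] Lu[of n] n3 by auto
    ultimately show ?thesis by simp
  qed
  have pd: "\<forall>i\<in>{3..n}. \<bar>T i (i - 1)\<bar> \<le> 2 ^ (i - 2) \<and> \<bar>T i i\<bar> \<le> 2 ^ (i - 1)"
  proof
    fix i assume i: "i \<in> {3..n}"
    have t1: "\<bar>T (i-1) i\<bar> \<le> 2^(i-2)"
    proof -
      have hb': "\<forall>a\<in>{1..n}. \<bar>H a i\<bar> \<le> 2^(i-2)" using Hb[of i] i by auto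
      have "i - 1 \<in> {1..n}" using i by auto
      with hb' have "\<bar>H (i-1) i\<bar> \<le> 2^(i-2)" by blast
      then show ?thesis using Hup[of i] i by auto
    qed
    have s: "T i (i-1) = T (i-1) i" using i by (intro Ts) auto
    have hii: "H i i = L i (i-1) * T (i-1) i + T i i"
    proof (cases "i = n")
      case True then show ?thesis using Hn[of n] Lu[of n] i by auto
    next
      case False
      then have "H i i = L i (i - 1) * T (i - 1) i + L i i * T i i + L i (i + 1) * T (i + 1) i"
        using i by (intro H3) auto
      then show ?thesis using Lu[of i] Lz[of i "i+1"] i False by auto
    qed
    have i1: "i \<in> {1..n}" "i - 1 \<in> {1..n}" "i \<in> {2..n}" using i by auto
    have hb: "\<bar>H i i\<bar> \<le> 2^(i-2)" using Hb[OF i1(3)] i1(1) by blast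
    have lb: "\<bar>L i (i-1)\<bar> \<le> 1" using Lbnd i1(1,2) by blast
    have "\<bar>L i (i-1) * T (i-1) i\<bar> \<le> 1 * 2^(i-2)"
      unfolding abs_mult by (rule mult_mono) (use lb t1 in auto)
    then have "\<bar>T i i\<bar> \<le> 2^(i-2) + 2^(i-2)" using hii hb by linarith
    also have "\<dots> = 2^(i-1)"
    proof -
      obtain k where k: "i = k + 3" using i by (metis add.commute atLeastAtMost_iff le_Suc_ex)
      show ?thesis unfolding k by simp
    qed
    finally have "\<bar>T i i\<bar> \<le> 2 ^ (i - 1)" .
    moreover have "\<bar>T i (i - 1)\<bar> \<le> 2 ^ (i - 2)" using t1 unfolding s .
    ultimately show "\<bar>T i (i - 1)\<bar> \<le> 2 ^ (i - 2) \<and> \<bar>T i i\<bar> \<le> 2 ^ (i - 1)" by (intro conjI)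
  qed
  show ?thesis using pa1 pa2 pa3 pa4 pb pc pd by (intro conjI)
qed

end
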